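(* Assume (A4). Let $\beta>0$, $p\in(0,2]$, $t_0>0$, and let $w:[t_0,\infty)\to\mathbb R^m$ be continuous with $w(t)\to w^*\in\mathbb R^m$ as $t\to\infty$. For $t\ge t_0$ let $$z(t):=\operatorname{argmin}_{z\in\mathcal H}\ \max_{i=1,\dots,m}\big(f_i(z)-w_i(t)\big)+\frac{\beta}{2t^p}\|z\|^2$$ (unique minimizer). Then $z(t)\to z_0(w^* )$ strongly as $t\to\infty$.
   Context: $\mathcal H$ is a real Hilbert space with norm $\|\cdot\|$; $f_1,\dots,f_m:\mathcal H\to\mathbb R$ are convex and continuously differentiable. For $w\in\mathbb R^m$, $S(w):=\operatorname{argmin}_{z\in\mathcal H}\max_{i}(f_i(z)-w_i)$ and $z_0(w):=\operatorname{proj}_{S(w)}(0)$, the element of minimal norm of $S(w)$. Assumption (A4): $S(w)\neq\emptyset$ for every $w\in\mathbb R^m$ and the map $w\mapsto z_0(w)$ is continuous on $\mathbb R^m$. *)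

theory Defs
  imports "HOL-Analysis.Analysis"
begin

text \<open>The index set {1..m} is a finite type 'm; weights w live in real^'m.
  The Hilbert space H is a type of class real_inner + complete_space.\<close>

definition maxobj :: "('m::finite \<Rightarrow> 'a \<Rightarrow> real) \<Rightarrow> real^'m \<Rightarrow> 'a \<Rightarrow> real" where
  "maxobj f w z = Max (range (\<lambda>i. f i z - w $ i))"

definition Sset :: "('m::finite \<Rightarrow> 'a \<Rightarrow> real) \<Rightarrow> real^'m \<Rightarrow> 'a set" where
  "Sset f w = {z. \<forall>y. maxobj f w z \<le> maxobj f w y}"

text \<open>z0(w) = proj_{S(w)}(0), the element of minimal norm of S(w).\<close>
definition z0 :: "('m::finite \<Rightarrow> 'a::real_normed_vector \<Rightarrow> real) \<Rightarrow> real^'m \<Rightarrow> 'a" where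
  "z0 f w = (SOME z. z \<in> Sset f w \<and> (\<forall>y\<in>Sset f w. norm z \<le> norm y))"

text \<open>Continuous differentiability, expressed via a continuous gradient (Riesz).\<close>
definition C1_fun :: "('a::real_inner \<Rightarrow> real) \<Rightarrow> bool" where
  "C1_fun g \<longleftrightarrow> (\<exists>G. (\<forall>x. (g has_derivative (\<lambda>h. G x \<bullet> h)) (at x)) \<and> continuous_on UNIV G)"

definition A4 :: "('m::finite \<Rightarrow> 'a::real_normed_vector \<Rightarrow> real) \<Rightarrow> bool" where
  "A4 f \<longleftrightarrow> (\<forall>w. Sset f w \<noteq> {}) \<and> continuous_on UNIV (z0 f)"

definition ztik :: "('m::finite \<Rightarrow> 'a::real_normed_vector \<Rightarrow> real) \<Rightarrow> real \<Rightarrow> real \<Rightarrow> (real \<Rightarrow> real^'m) \<Rightarrow> real \<Rightarrow> 'a" where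
  "ztik f \<beta> p w t = (THE z. \<forall>y. maxobj f (w t) z + \<beta> / (2 * t powr p) * (norm z)\<^sup>2
                                \<le> maxobj f (w t) y + \<beta> / (2 * t powr p) * (norm y)\<^sup>2)"

end

theory Submission imports Defs begin

lemma mid_norm:
  fixes a b :: "'a::real_inner"
  shows "(norm (a - b))^2 = 2*(norm a)^2 + 2*(norm b)^2 - 4*(norm ((1/2) *\<^sub>R (a+b)))^2"
  unfolding dot_square_norm[symmetric]
  by (simp add: inner_add_left inner_add_right inner_commute algebra_simps)

lemma cauchy_bound:
  fixes s :: "nat \<Rightarrow> 'a::real_normed_vector"
  assumes b: "\<And>n k. n \<le> k \<Longrightarrow> (norm (s n - s k))^2 \<le> b n" and lim: "b \<longlonglongrightarrow> 0"
  shows "Cauchy s"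
proof (rule metric_CauchyI)
  fix e :: real assume e: "e > 0"
  have "eventually (\<lambda>n. b n < (e/2)^2) sequentially"
    using lim e by (simp add: order_tendsto_iff)
  then obtain N where N: "b N < (e/2)^2" by (auto simp: eventually_sequentially)
  have h: "norm (s N - s m) < e/2" if "m \<ge> N" for m
  proof -
    have "(norm (s N - s m))^2 < (e/2)^2" using b[OF that] N by linarith
    then show ?thesis using e using power_less_imp_less_base[of "norm (s N - s m)" 2 "e/2"] by linarith
  qed
  show "\<exists>M. \<forall>m\<ge>M. \<forall>n\<ge>M. dist (s m) (s n) < e"
  proof (intro exI allI impI)
    fix m n assume "m \<ge> N" "n \<ge> N"
    have "dist (s m) (s n) \<le> norm (s N - s m) + norm (s N - s n)"
      using dist_triangle[of "s m" "s n" "s N"] by (simp add: dist_norm norm_minus_commute)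
    then show "dist (s m) (s n) < e" using h[OF \<open>m\<ge>N\<close>] h[OF \<open>n\<ge>N\<close>] by linarith
  qed
qed

context
  fixes F :: "'a::{real_inner,complete_space} \<Rightarrow> real" and x0 :: 'a
  assumes mid: "\<And>a b. F ((1/2) *\<^sub>R (a+b)) \<le> (F a + F b)/2"
    and lsc: "\<And>s y b c. s \<longlonglongrightarrow> y \<Longrightarrow> (\<And>n. F (s n) \<le> b n) \<Longrightarrow> b \<longlonglongrightarrow> c \<Longrightarrow> F y \<le> c"
    and x0: "\<And>y. F x0 \<le> F y"
begin

lemma tik_exists:
  assumes c: "c > 0"
  shows "\<exists>!z. \<forall>y. F z + c * (norm z)^2 \<le> F y + c * (norm y)^2"
proof -
  define G where "G y = F y + c * (norm y)^2" for y
  have Gge: "F x0 \<le> G y" for y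
  proof -
    have "0 \<le> c * (norm y)^2" using c by simp
    then show ?thesis using x0[of y] by (simp add: G_def)
  qed
  have bdd: "bdd_below (range G)" by (rule bdd_belowI2[where m="F x0"]) (rule Gge)
  define \<nu> where "\<nu> = Inf (range G)"
  have nule: "\<nu> \<le> G y" for y unfolding \<nu>_def by (rule cInf_lower[OF _ bdd]) auto
  have strong: "G ((1/2) *\<^sub>R (a+b)) \<le> (G a + G b)/2 - c/4 * (norm (a-b))^2" for a b
  proof -
    have "c/4 * (norm (a-b))^2 = (c*(norm a)^2)/2 + (c*(norm b)^2)/2 - c*(norm ((1/2) *\<^sub>R (a+b)))^2"
      by (subst mid_norm) (simp add: algebra_simps)
    then show ?thesis using mid[of a b] unfolding G_def by (simp add: algebra_simps)
  qed
  have "\<exists>y. G y < \<nu> + 1/(Suc n)" for n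
  proof -
    have "Inf (range G) < \<nu> + 1/(Suc n)" unfolding \<nu>_def by simp
    then show ?thesis using cInf_less_iff[OF _ bdd] by auto
  qed
  then obtain s where s: "\<And>n. G (s n) < \<nu> + 1/(Suc n)" by metis
  have sb: "(norm (s n - s k))^2 \<le> (4/c) * (1/(Suc n))" if "n \<le> k" for n k
  proof -
    have "1/(Suc k) \<le> 1/(real (Suc n))" using that by (simp add: frac_le)
    then have "G (s k) < \<nu> + 1/(Suc n)" using s[of k] by linarith
    then have "c/4 * (norm (s n - s k))^2 \<le> 1/(Suc n)"
      using strong[of "s n" "s k"] nule[of "(1/2) *\<^sub>R (s n + s k)"] s[of n] by argo
    moreover have "0 < c + c * real n" using c by (simp add: add_pos_nonneg)
    ultimately show ?thesis using c by (simp add: field_simps)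
  qed
  have "Cauchy s"
  proof (rule cauchy_bound[OF sb])
    have "(\<lambda>n. (4/c) * inverse (real (Suc n))) \<longlonglongrightarrow> 0"
      by (rule tendsto_mult_right_zero[OF LIMSEQ_inverse_real_of_nat])
    then show "(\<lambda>n. (4/c) * (1/real (Suc n))) \<longlonglongrightarrow> 0" by (simp add: inverse_eq_divide)
  qed
  then obtain y where y: "s \<longlonglongrightarrow> y" using Cauchy_convergent_iff convergent_def by blast
  have "F y \<le> \<nu> - c * (norm y)^2"
  proof (rule lsc[OF y])
    show "F (s n) \<le> \<nu> + 1/(Suc n) - c * (norm (s n))^2" for n using s[of n] by (simp add: G_def)
    have l1: "(\<lambda>n. 1/real (Suc n)) \<longlonglongrightarrow> 0" using LIMSEQ_inverse_real_of_nat by (simp add: inverse_eq_divide)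
    have "(\<lambda>n. \<nu> + 1/(Suc n) - c * (norm (s n))^2) \<longlonglongrightarrow> \<nu> + 0 - c * (norm y)^2"
      by (intro tendsto_intros y l1)
    then show "(\<lambda>n. \<nu> + 1/(Suc n) - c * (norm (s n))^2) \<longlonglongrightarrow> \<nu> - c * (norm y)^2" by simp
  qed
  then have ymin: "G y \<le> G z" for z using nule[of z] by (simp add: G_def)
  show ?thesis
  proof (rule ex1I[of _ y])
    show "\<forall>z. F y + c * (norm y)^2 \<le> F z + c * (norm z)^2" using ymin by (simp add: G_def)
    fix z assume "\<forall>y. F z + c * (norm z)^2 \<le> F y + c * (norm y)^2"
    then have zmin: "G z \<le> G u" for u by (simp add: G_def)
    have "c/4 * (norm (z - y))^2 \<le> 0"
      using strong[of z y] zmin[of "(1/2) *\<^sub>R (z+y)"] ymin[of "(1/2) *\<^sub>R (z+y)"] ymin[of z] zmin[of y] by argo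
    then show "z = y" using c by (simp add: mult_le_0_iff)
  qed
qed

lemma minnorm_all:
  "\<exists>x. (\<forall>y. F x \<le> F y) \<and> (\<forall>y. (\<forall>y'. F y \<le> F y') \<longrightarrow> norm x \<le> norm y) \<and>
     (\<forall>x'. (\<forall>y. F x' \<le> F y) \<and> (\<forall>y. (\<forall>y'. F y \<le> F y') \<longrightarrow> norm x' \<le> norm y) \<longrightarrow>
        (\<forall>e>0. \<exists>\<eta>>0. \<forall>z. F z \<le> F x' + \<eta> \<and> (norm z)^2 \<le> (norm x')^2 + \<eta> \<longrightarrow> norm (z - x') < e))"
proof -
  define A where "A \<eta> = {y. F y \<le> F x0 + \<eta>}" for \<eta>
  define r where "r \<eta> = Inf (norm ` A \<eta>)" for \<eta>
  have x0A: "x0 \<in> A \<eta>" if "0 \<le> \<eta>" for \<eta> using that by (simp add: A_def)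
  have bdd: "bdd_below (norm ` A \<eta>)" for \<eta> by (rule bdd_belowI2[where m=0]) simp
  have rle: "r \<eta> \<le> norm y" if "y \<in> A \<eta>" for \<eta> y
    unfolding r_def by (rule cInf_lower[OF _ bdd]) (use that in auto)
  have rge0: "0 \<le> r \<eta>" if "0 \<le> \<eta>" for \<eta>
    unfolding r_def by (rule cInf_greatest) (use x0A[OF that] in auto)
  have rmono: "r \<eta>' \<le> r \<eta>" if "0 \<le> \<eta>" "\<eta> \<le> \<eta>'" for \<eta> \<eta>'
    unfolding r_def
  proof (rule cInf_superset_mono)
    show "norm ` A \<eta> \<noteq> {}" using x0A[OF that(1)] by blast
    show "bdd_below (norm ` A \<eta>')" by (rule bdd)
    show "norm ` A \<eta> \<subseteq> norm ` A \<eta>'" using that by (auto simp: A_def)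
  qed
  have rapprox: "\<exists>y\<in>A \<eta>. norm y < r \<eta> + e" if "0 \<le> \<eta>" "e > 0" for \<eta> e
  proof -
    have "Inf (norm ` A \<eta>) < r \<eta> + e" using that by (simp add: r_def)
    then show ?thesis using cInf_less_iff[of "norm ` A \<eta>" "r \<eta> + e"] bdd[of \<eta>] x0A[OF that(1)] by auto
  qed
  have Amid: "(1/2) *\<^sub>R (a + b) \<in> A \<eta>" if "a \<in> A \<eta>" "b \<in> A \<eta>" for a b \<eta>
    using mid[of a b] that unfolding A_def by auto
  have Amono: "A \<eta> \<subseteq> A \<eta>'" if "\<eta> \<le> \<eta>'" for \<eta> \<eta>' using that by (auto simp: A_def)
  have inv: "1/real (Suc k) \<le> 1/real (Suc n)" if "n \<le> k" for n k using that by (simp add: frac_le)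
  have l1: "(\<lambda>n. 1/real (Suc n)) \<longlonglongrightarrow> 0" using LIMSEQ_inverse_real_of_nat by (simp add: inverse_eq_divide)
  define sq where "sq n = r (1/real (Suc n))" for n
  have sq0: "0 \<le> sq n" for n unfolding sq_def by (rule rge0) simp
  have "incseq sq"
  proof (rule incseq_SucI)
    fix n show "sq n \<le> sq (Suc n)" unfolding sq_def by (rule rmono) (simp, rule inv, simp)
  qed
  moreover have "\<forall>i. sq i \<le> norm x0" unfolding sq_def by (auto intro!: rle x0A)
  ultimately obtain R where R: "sq \<longlonglongrightarrow> R" "\<And>i. sq i \<le> R" by (metis incseq_convergent)
  have "\<exists>y. y \<in> A (1/real (Suc n)) \<and> norm y < sq n + 1/real (Suc n)" for n
    using rapprox[of "1/real (Suc n)" "1/real (Suc n)"] unfolding sq_def by auto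
  then obtain y where yA: "\<And>n. y n \<in> A (1/real (Suc n))" and yn: "\<And>n. norm (y n) < sq n + 1/real (Suc n)"
    by metis
  have ynR: "norm (y n) \<le> R + 1/real (Suc n)" for n using yn[of n] R(2)[of n] by linarith
  have yb: "(norm (y n - y k))^2 \<le> 4*(R + 1/real (Suc n))^2 - 4*(sq n)^2" if "n \<le> k" for n k
  proof -
    have ykA: "y k \<in> A (1/real (Suc n))" using yA[of k] Amono[OF inv[OF that]] by auto
    have mA: "(1/2) *\<^sub>R (y n + y k) \<in> A (1/real (Suc n))" by (rule Amid[OF yA ykA])
    have "sq n \<le> norm ((1/2) *\<^sub>R (y n + y k))" unfolding sq_def by (rule rle[OF mA])
    then have a: "(sq n)^2 \<le> (norm ((1/2) *\<^sub>R (y n + y k)))^2" using sq0[of n] by (simp add: power_mono)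
    have b: "(norm (y n))^2 \<le> (R + 1/real (Suc n))^2" using ynR[of n] by (simp add: power_mono)
    have "norm (y k) \<le> R + 1/real (Suc n)" using ynR[of k] inv[OF that] by linarith
    then have c: "(norm (y k))^2 \<le> (R + 1/real (Suc n))^2" by (simp add: power_mono)
    show ?thesis using mid_norm[of "y n" "y k"] a b c by argo
  qed
  have "Cauchy y"
  proof (rule cauchy_bound[OF yb])
    have "(\<lambda>n. 4*(R + 1/real (Suc n))^2 - 4*(sq n)^2) \<longlonglongrightarrow> 4*(R + 0)^2 - 4*R^2"
      by (intro tendsto_intros l1 R(1))
    then show "(\<lambda>n. 4*(R + 1/real (Suc n))^2 - 4*(sq n)^2) \<longlonglongrightarrow> 0" by simp
  qed
  then obtain x where x: "y \<longlonglongrightarrow> x" using Cauchy_convergent_iff convergent_def by blast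
  have Fx: "F x \<le> F x0"
  proof (rule lsc[OF x])
    show "F (y n) \<le> F x0 + 1/real (Suc n)" for n using yA[of n] by (simp add: A_def)
    have "(\<lambda>n. F x0 + 1/real (Suc n)) \<longlonglongrightarrow> F x0 + 0" by (intro tendsto_intros l1)
    then show "(\<lambda>n. F x0 + 1/real (Suc n)) \<longlonglongrightarrow> F x0" by simp
  qed
  have xmin: "\<forall>y. F x \<le> F y" using Fx x0 order_trans by blast
  have nxR: "norm x \<le> R"
  proof -
    have "(\<lambda>n. R + 1/real (Suc n)) \<longlonglongrightarrow> R + 0" by (intro tendsto_intros l1)
    then show ?thesis using LIMSEQ_le[OF tendsto_norm[OF x], of "\<lambda>n. R + 1/real (Suc n)" "R + 0"] ynR by auto
  qed
  have Rle: "R \<le> norm y'" if "\<forall>y''. F y' \<le> F y''" for y'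
  proof (rule LIMSEQ_le_const2[OF R(1)])
    have "y' \<in> A (1/real (Suc n))" for n using that[rule_format, of x0] unfolding A_def by (auto intro: add_increasing2)
    then show "\<exists>N. \<forall>n\<ge>N. sq n \<le> norm y'" unfolding sq_def using rle by blast
  qed
  show ?thesis
  proof (rule exI[of _ x], intro conjI)
    show "\<forall>y. F x \<le> F y" using xmin by blast
    show "\<forall>y'. (\<forall>y''. F y' \<le> F y'') \<longrightarrow> norm x \<le> norm y'" using Rle nxR by force
    show "\<forall>x'. (\<forall>y. F x' \<le> F y) \<and> (\<forall>y. (\<forall>y'. F y \<le> F y') \<longrightarrow> norm x' \<le> norm y) \<longrightarrow>
        (\<forall>e>0. \<exists>\<eta>>0. \<forall>z. F z \<le> F x' + \<eta> \<and> (norm z)^2 \<le> (norm x')^2 + \<eta> \<longrightarrow> norm (z - x') < e)"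
    proof (intro allI impI)
      fix x' :: 'a and e :: real
      assume H: "(\<forall>y. F x' \<le> F y) \<and> (\<forall>y. (\<forall>y'. F y \<le> F y') \<longrightarrow> norm x' \<le> norm y)"
      assume e: "e > 0"
      have "norm x' \<le> norm x" using H xmin by blast
      moreover have "R \<le> norm x'" using Rle H by blast
      ultimately have nx': "norm x' = R" using nxR by linarith
      then have nx2: "(norm x')^2 = R^2" by simp
      have Fx': "F x' = F x0" using H x0[of x'] by (meson order_antisym)
      have "(\<lambda>n. (sq n)^2) \<longlonglongrightarrow> R^2" by (intro tendsto_intros R(1))
      moreover have "R^2 - e^2/8 < R^2" using e by simp
      ultimately have "eventually (\<lambda>n. R^2 - e^2/8 < (sq n)^2) sequentially"
        by (simp add: order_tendsto_iff)
      then obtain N where N: "R^2 - e^2/8 < (sq N)^2" by (auto simp: eventually_sequentially)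
      define \<eta> where "\<eta> = min (1/real (Suc N)) (e^2/8)"
      have \<eta>pos: "\<eta> > 0" using e by (simp add: \<eta>_def)
      have \<eta>1: "\<eta> \<le> 1/real (Suc N)" and \<eta>2: "\<eta> \<le> e^2/8" by (simp_all add: \<eta>_def)
      show "\<exists>\<eta>>0. \<forall>z. F z \<le> F x' + \<eta> \<and> (norm z)^2 \<le> (norm x')^2 + \<eta> \<longrightarrow> norm (z - x') < e"
      proof (rule exI[of _ \<eta>], intro conjI allI impI)
        show "\<eta> > 0" by (rule \<eta>pos)
        fix z assume Z: "F z \<le> F x' + \<eta> \<and> (norm z)^2 \<le> (norm x')^2 + \<eta>"
        have zA: "z \<in> A (1/real (Suc N))" using Z Fx' \<eta>1 by (simp add: A_def)
        have x'A: "x' \<in> A (1/real (Suc N))" using Fx' by (simp add: A_def)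
        have mA: "(1/2) *\<^sub>R (z + x') \<in> A (1/real (Suc N))" by (rule Amid[OF zA x'A])
        have "sq N \<le> norm ((1/2) *\<^sub>R (z + x'))" unfolding sq_def by (rule rle[OF mA])
        then have a: "(sq N)^2 \<le> (norm ((1/2) *\<^sub>R (z + x')))^2" using sq0[of N] by (simp add: power_mono)
        have e2: "0 < e^2" using e by simp
        have "(norm (z - x'))^2 < e^2" using mid_norm[of z x'] a Z nx2 N \<eta>2 e2 by argo
        then show "norm (z - x') < e" using power_less_imp_less_base[of "norm (z - x')" 2 e] e by linarith
      qed
    qed
  qed
qed

end

lemma maxobj_ge: "f i z - w $ i \<le> maxobj f w z"
  unfolding maxobj_def by (rule Max_ge) auto

lemma maxobj_attained: "\<exists>i. maxobj f w z = f i z - w $ i"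
proof -
  have "maxobj f w z \<in> range (\<lambda>i. f i z - w $ i)" unfolding maxobj_def by (rule Max_in) auto
  then show ?thesis by auto
qed

lemma maxobj_mid:
  fixes f :: "'m::finite \<Rightarrow> 'a::real_vector \<Rightarrow> real"
  assumes cv: "\<And>i. convex_on UNIV (f i)"
  shows "maxobj f w ((1/2) *\<^sub>R (a+b)) \<le> (maxobj f w a + maxobj f w b)/2"
proof -
  obtain i where i: "maxobj f w ((1/2) *\<^sub>R (a+b)) = f i ((1/2) *\<^sub>R (a+b)) - w $ i"
    using maxobj_attained[of f w "(1/2) *\<^sub>R (a+b)"] by blast
  have "f i ((1 - 1/2) *\<^sub>R a + (1/2) *\<^sub>R b) \<le> (1 - 1/2) * f i a + (1/2) * f i b"
    by (rule convex_onD[OF cv]) auto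
  then have "f i ((1/2) *\<^sub>R (a+b)) \<le> (f i a + f i b)/2" by (simp add: scaleR_add_right)
  then show ?thesis using i maxobj_ge[of f i a w] maxobj_ge[of f i b w] by argo
qed

lemma maxobj_lsc:
  fixes f :: "'m::finite \<Rightarrow> 'a::metric_space \<Rightarrow> real"
  assumes ct: "\<And>i. isCont (f i) y"
    and s: "s \<longlonglongrightarrow> y" and b: "\<And>n. maxobj f w (s n) \<le> b n" and c: "b \<longlonglongrightarrow> c"
  shows "maxobj f w y \<le> c"
proof -
  obtain i where i: "maxobj f w y = f i y - w $ i" using maxobj_attained[of f w y] by blast
  have "(\<lambda>n. f i (s n) - w $ i) \<longlonglongrightarrow> f i y - w $ i"
    by (intro tendsto_intros isCont_tendsto_compose[OF ct s])
  moreover have "f i (s n) - w $ i \<le> b n" for n using maxobj_ge[of f i "s n" w] b[of n] by linarith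
  ultimately have "f i y - w $ i \<le> c" using LIMSEQ_le[OF _ c] by blast
  then show ?thesis using i by simp
qed

lemma maxobj_lip: "maxobj f w z \<le> maxobj f v z + norm (w - v)"
proof -
  obtain i where i: "maxobj f w z = f i z - w $ i" using maxobj_attained[of f w z] by blast
  have "\<bar>(w - v) $ i\<bar> \<le> norm (w - v)" by (rule component_le_norm_cart)
  then show ?thesis using i maxobj_ge[of f i z v] by auto
qed

lemma powr_top: assumes "(p::real) > 0" shows "filterlim (\<lambda>x. x powr p) at_top at_top"
proof (subst filterlim_cong[OF refl refl])
  show "LIM x at_top. exp (p * ln x) :> at_top"
    by (rule filterlim_compose[OF exp_at_top filterlim_tendsto_pos_mult_at_top[OF tendsto_const]])
       (simp_all add: ln_at_top assms)
  show "eventually (\<lambda>x. x powr p = exp (p * ln x)) at_top"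
    using eventually_gt_at_top[of 0] by eventually_elim (simp add: powr_def)
qed

theorem mainTheorem5:
  fixes f :: "'m::finite \<Rightarrow> 'a::{real_inner, complete_space} \<Rightarrow> real"
    and \<beta> p t0 :: real
    and w :: "real \<Rightarrow> real^'m"
    and wstar :: "real^'m"
  assumes convex: "\<And>i. convex_on UNIV (f i)"
    and C1: "\<And>i. C1_fun (f i)"
    and A4: "A4 f"
    and beta: "\<beta> > 0"
    and p: "0 < p" "p \<le> 2"
    and t0: "t0 > 0"
    and wcont: "continuous_on {t0..} w"
    and wlim: "(w \<longlongrightarrow> wstar) at_top"
  shows "((\<lambda>t. ztik f \<beta> p w t) \<longlongrightarrow> z0 f wstar) at_top"
proof -
  have ct: "isCont (f i) y" for i y
  proof -
    obtain G where "\<And>x. (f i has_derivative (\<lambda>h. G x \<bullet> h)) (at x)" using C1[of i] unfolding C1_fun_def by blast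
    then show ?thesis using has_derivative_continuous by blast
  qed
  have mid: "maxobj f v ((1/2) *\<^sub>R (a+b)) \<le> (maxobj f v a + maxobj f v b)/2" for v a b
    by (rule maxobj_mid[OF convex])
  have lsc: "s \<longlonglongrightarrow> y \<Longrightarrow> (\<And>n. maxobj f v (s n) \<le> b n) \<Longrightarrow> b \<longlonglongrightarrow> c \<Longrightarrow> maxobj f v y \<le> c" for v s y b c
    by (rule maxobj_lsc[where f=f]) (rule ct, assumption+)
  have Sne: "\<exists>x0. \<forall>y. maxobj f v x0 \<le> maxobj f v y" for v
    using A4 unfolding A4_def Sset_def by blast
  have allmn: "\<exists>x. (\<forall>y. maxobj f v x \<le> maxobj f v y) \<and> (\<forall>y. (\<forall>y'. maxobj f v y \<le> maxobj f v y') \<longrightarrow> norm x \<le> norm y) \<and>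
     (\<forall>x'. (\<forall>y. maxobj f v x' \<le> maxobj f v y) \<and> (\<forall>y. (\<forall>y'. maxobj f v y \<le> maxobj f v y') \<longrightarrow> norm x' \<le> norm y) \<longrightarrow>
        (\<forall>e>0. \<exists>\<eta>>0. \<forall>z. maxobj f v z \<le> maxobj f v x' + \<eta> \<and> (norm z)^2 \<le> (norm x')^2 + \<eta> \<longrightarrow> norm (z - x') < e))" for v
  proof -
    obtain x0 where x0: "\<forall>y. maxobj f v x0 \<le> maxobj f v y" using Sne by blast
    show ?thesis
      by (rule minnorm_all[of "maxobj f v" x0]) (rule mid, rule lsc, assumption+, rule x0[rule_format])
  qed
  have z0prop: "(\<forall>y. maxobj f v (z0 f v) \<le> maxobj f v y) \<and> (\<forall>y. (\<forall>y'. maxobj f v y \<le> maxobj f v y') \<longrightarrow> norm (z0 f v) \<le> norm y)" for v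
  proof -
    obtain x where "(\<forall>y. maxobj f v x \<le> maxobj f v y) \<and> (\<forall>y. (\<forall>y'. maxobj f v y \<le> maxobj f v y') \<longrightarrow> norm x \<le> norm y)"
      using allmn[of v] by blast
    then have "\<exists>z. z \<in> Sset f v \<and> (\<forall>y\<in>Sset f v. norm z \<le> norm y)" unfolding Sset_def by auto
    then have "z0 f v \<in> Sset f v \<and> (\<forall>y\<in>Sset f v. norm (z0 f v) \<le> norm y)" unfolding z0_def by (rule someI_ex)
    then show ?thesis unfolding Sset_def by auto
  qed
  define xs where "xs = z0 f wstar"
  have stab: "\<forall>e>0. \<exists>\<eta>>0. \<forall>z. maxobj f wstar z \<le> maxobj f wstar xs + \<eta> \<and> (norm z)^2 \<le> (norm xs)^2 + \<eta> \<longrightarrow> norm (z - xs) < e"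
    using allmn[of wstar] z0prop[of wstar] unfolding xs_def by blast
  define \<epsilon> where "\<epsilon> t = \<beta> / (2 * t powr p)" for t
  define u where "u t = z0 f (w t)" for t
  define zt where "zt t = ztik f \<beta> p w t" for t
  have \<epsilon>pos: "\<epsilon> t > 0" if "t > 0" for t using beta that by (simp add: \<epsilon>_def)
  have ztprop: "\<forall>y. maxobj f (w t) (zt t) + \<epsilon> t * (norm (zt t))^2 \<le> maxobj f (w t) y + \<epsilon> t * (norm y)^2" if "t > 0" for t
  proof -
    obtain x0 where x0: "\<forall>y. maxobj f (w t) x0 \<le> maxobj f (w t) y" using Sne by blast
    have "\<exists>!z. \<forall>y. maxobj f (w t) z + \<epsilon> t * (norm z)^2 \<le> maxobj f (w t) y + \<epsilon> t * (norm y)^2"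
      by (rule tik_exists[of "maxobj f (w t)" x0]) (rule mid, rule lsc, assumption+, rule x0[rule_format], rule \<epsilon>pos[OF that])
    then show ?thesis unfolding zt_def ztik_def \<epsilon>_def by (rule theI')
  qed
  have \<epsilon>0: "(\<epsilon> \<longlongrightarrow> 0) at_top"
  proof -
    have "filterlim (\<lambda>t. 2 * t powr p) at_top at_top"
      by (rule filterlim_tendsto_pos_mult_at_top[OF tendsto_const _ powr_top[OF p(1)]]) simp
    then have "((\<lambda>t. \<beta> / (2 * t powr p)) \<longlongrightarrow> 0) at_top"
      by (intro tendsto_divide_0[OF tendsto_const] filterlim_at_top_imp_at_infinity)
    then show ?thesis unfolding \<epsilon>_def[abs_def] .
  qed
  have \<delta>0: "((\<lambda>t. norm (w t - wstar)) \<longlongrightarrow> 0) at_top"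
    by (rule tendsto_norm_zero[OF LIM_zero[OF wlim]])
  have "isCont (z0 f) wstar" using A4 unfolding A4_def by (simp add: continuous_on_eq_continuous_at)
  then have ulim: "(u \<longlongrightarrow> xs) at_top" unfolding u_def[abs_def] xs_def by (rule isCont_tendsto_compose[OF _ wlim])
  have "((\<lambda>t. 2 * norm (w t - wstar) + \<epsilon> t * (norm (u t))^2) \<longlongrightarrow> 2 * 0 + 0 * (norm xs)^2) at_top"
    by (intro tendsto_intros \<delta>0 \<epsilon>0 ulim)
  then have T1: "((\<lambda>t. 2 * norm (w t - wstar) + \<epsilon> t * (norm (u t))^2) \<longlongrightarrow> 0) at_top" by simp
  have T2: "((\<lambda>t. (norm (u t))^2) \<longlongrightarrow> (norm xs)^2) at_top" by (intro tendsto_intros ulim)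
  show ?thesis
    unfolding zt_def[symmetric] xs_def[symmetric] tendsto_iff
  proof (intro allI impI)
    fix e :: real assume e: "e > 0"
    obtain \<eta> where \<eta>: "\<eta> > 0" and st: "\<And>z. maxobj f wstar z \<le> maxobj f wstar xs + \<eta> \<and> (norm z)^2 \<le> (norm xs)^2 + \<eta> \<Longrightarrow> norm (z - xs) < e"
      using stab e by blast
    have ev1: "eventually (\<lambda>t. 2 * norm (w t - wstar) + \<epsilon> t * (norm (u t))^2 < \<eta>) at_top"
      using T1 \<eta> by (simp add: order_tendsto_iff)
    have ev2: "eventually (\<lambda>t. (norm (u t))^2 < (norm xs)^2 + \<eta>) at_top"
      using T2 \<eta> by (simp add: order_tendsto_iff)
    show "eventually (\<lambda>t. dist (zt t) xs < e) at_top"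
      using ev1 ev2 eventually_gt_at_top[of 0]
    proof eventually_elim
      case (elim t)
      define \<phi> where "\<phi> = maxobj f (w t)"
      define \<phi>s where "\<phi>s = maxobj f wstar"
      define d where "d = norm (w t - wstar)"
      have ZP: "\<phi> (zt t) + \<epsilon> t * (norm (zt t))^2 \<le> \<phi> (u t) + \<epsilon> t * (norm (u t))^2"
        using ztprop[OF elim(3)] unfolding \<phi>_def by blast
      have U: "\<phi> (u t) \<le> \<phi> (zt t)" and U2: "\<phi> (u t) \<le> \<phi> xs"
        using z0prop[of "w t"] unfolding \<phi>_def u_def by blast+
      have L1: "\<phi>s (zt t) \<le> \<phi> (zt t) + d"
        using maxobj_lip[of f wstar "zt t" "w t"] unfolding \<phi>_def \<phi>s_def d_def by (simp add: norm_minus_commute)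
      have L2: "\<phi> xs \<le> \<phi>s xs + d"
        using maxobj_lip[of f "w t" xs wstar] unfolding \<phi>_def \<phi>s_def d_def by simp
      have nz: "0 \<le> \<epsilon> t * (norm (zt t))^2" using \<epsilon>pos[OF elim(3)] by simp
      have A: "\<phi>s (zt t) \<le> \<phi>s xs + \<eta>" using ZP U2 L1 L2 nz elim(1) unfolding d_def by argo
      have "\<epsilon> t * (norm (zt t))^2 \<le> \<epsilon> t * (norm (u t))^2" using ZP U by argo
      then have "(norm (zt t))^2 \<le> (norm (u t))^2" using \<epsilon>pos[OF elim(3)] by simp
      then have B: "(norm (zt t))^2 \<le> (norm xs)^2 + \<eta>" using elim(2) by argo
      have "norm (zt t - xs) < e" using st A B unfolding \<phi>s_def by blast
      then show ?case by (simp add: dist_norm)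
    qed
  qed
qed

end
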